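(* The monoid $\mathrm{rps}$ does not satisfy any non-trivial identity.
   Context: Let $\mathcal{A}=\{1<2<3<\cdots\}$. An rPS tableau is a finite (possibly empty) sequence of nonempty bottom-justified columns of boxes filled with elements of $\mathcal{A}$, such that the entries of each column are weakly decreasing from top to bottom and the bottom entries of the columns form a strictly increasing sequence from left to right. Right insertion of a symbol $a$ into an rPS tableau $B$: if $a$ is strictly greater than every entry of the bottom row, append a new column consisting of $a$ at the right end; otherwise, let $z$ be the leftmost bottom-row entry with $z\geq a$ and put $a$ in a new box at the bottom of the column of $z$ (the previous entries of that column move up one box). For $w=w_1\cdots w_k$, $\mathfrak{R}_r(w)$ is obtained by starting with the empty tableau and right-inserting $w_1,\dots,w_k$ in order. The monoid $\mathrm{rps}$ is the quotient of $\mathcal{A}^*$ by the congruence $u\equiv v\iff\mathfrak{R}_r(u)=\mathfrak{R}_r(v)$. An identity is a formal equality $u=v$ of words over a countable alphabet of variables; it is non-trivial if $u\neq v$ as words; a monoid $M$ satisfies it if equality holds under every substitution of elements of $M$ for the variables. *)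

theory Defs
  imports Main
begin

text \<open>Alphabet A = {1 < 2 < 3 < ...}: positive naturals.
  An rPS tableau is a list of columns (left to right); each column is a list of
  its entries listed from the BOTTOM box upwards (so the head is the bottom entry).\<close>

type_synonym rps_tableau = "nat list list"

fun rps_insert :: "nat \<Rightarrow> rps_tableau \<Rightarrow> rps_tableau" where
  "rps_insert a [] = [[a]]"
| "rps_insert a (c # cs) =
     (if a \<le> hd c then (a # c) # cs else c # rps_insert a cs)"

definition rps_tab :: "nat list \<Rightarrow> rps_tableau" where
  "rps_tab w = fold rps_insert w []"

definition rps_equiv :: "nat list \<Rightarrow> nat list \<Rightarrow> bool" where
  "rps_equiv u v \<longleftrightarrow> rps_tab u = rps_tab v"

text \<open>Identities are pairs of words over the countable variable alphabet nat.
  A substitution assigns to each variable an element of rps, represented by a word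
  over A; the value of a word is the class of the concatenation of the images.
  rps satisfies u = v iff for every substitution the two values are equal.\<close>

definition subst_word :: "(nat \<Rightarrow> nat list) \<Rightarrow> nat list \<Rightarrow> nat list" where
  "subst_word \<sigma> u = concat (map \<sigma> u)"

definition rps_satisfies :: "nat list \<Rightarrow> nat list \<Rightarrow> bool" where
  "rps_satisfies u v \<longleftrightarrow>
     (\<forall>\<sigma>. (\<forall>x. set (\<sigma> x) \<subseteq> {1..}) \<longrightarrow> rps_equiv (subst_word \<sigma> u) (subst_word \<sigma> v))"

end

theory Submission
  imports Defs
begin

lemma ins_pass: "(\<forall>c\<in>set B. hd c < x) \<Longrightarrow> rps_insert x (B @ C) = B @ rps_insert x C"
  by (induction B) auto

lemma ins_here: "x \<le> hd c \<Longrightarrow> rps_insert x (c # C) = (x # c) # C"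
  by simp

lemma rps_tab_append: "rps_tab (w @ w') = fold rps_insert w' (rps_tab w)"
  by (simp add: rps_tab_def)

lemma bfold_top:
  assumes "k \<le> n" "\<forall>c\<in>set B. hd c \<le> t" "t < k"
    "E = [] \<or> (\<exists>e. E = [e] \<and> e \<noteq> [] \<and> set e \<subseteq> {Suc n})"
  shows "foldr rps_insert [k..<Suc n] (B @ E) = B @ [[k..<Suc n] @ concat E]"
  using assms
proof (induction k rule: inc_induct)
  case base
  have hB: "\<forall>c\<in>set B. hd c < n" using base by force
  show ?case
  proof (cases "E = []")
    case True
    then show ?thesis using ins_pass[OF hB, of "[]"] by simp
  next
    case False
    then obtain e where e: "E = [e]" "e \<noteq> []" "set e \<subseteq> {Suc n}" using base by auto
    then have "hd e = Suc n" using hd_in_set by blast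
    then show ?thesis using ins_pass[OF hB, of E] e by simp
  qed
next
  case (step m)
  have hB: "\<forall>c\<in>set B. hd c < m" using step by force
  have "[m..<Suc n] = m # [Suc m..<Suc n]" using step by (simp add: upt_conv_Cons)
  then have "foldr rps_insert [m..<Suc n] (B @ E) = rps_insert m (B @ [[Suc m..<Suc n] @ concat E])"
    using step by simp
  also have "\<dots> = B @ rps_insert m [[Suc m..<Suc n] @ concat E]" using ins_pass[OF hB] by simp
  also have "\<dots> = B @ [m # [Suc m..<Suc n] @ concat E]"
  proof -
    have "hd ([Suc m..<Suc n] @ concat E) = Suc m" using step by (simp add: upt_conv_Cons del: upt_Suc)
    then show ?thesis using ins_here[of m "[Suc m..<Suc n] @ concat E" "[]"] by simp
  qed
  finally show ?case using \<open>[m..<Suc n] = m # [Suc m..<Suc n]\<close> by simp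
qed

lemma ins_mid:
  assumes "length B = t" "\<forall>i<t. B!i \<noteq> [] \<and> hd (B!i) = Suc i" "j < t"
  shows "rps_insert (Suc j) (B @ R) = B[j := Suc j # B!j] @ R"
proof -
  have split: "B @ R = take j B @ (B!j # (drop (Suc j) B @ R))"
    using assms id_take_nth_drop[of j B] by simp
  have hB: "\<forall>c\<in>set (take j B). hd c < Suc j"
  proof
    fix c assume "c \<in> set (take j B)"
    then obtain i where "i < length (take j B)" "c = take j B ! i" by (metis in_set_conv_nth)
    then show "hd c < Suc j" using assms by auto
  qed
  have "rps_insert (Suc j) (B @ R) = take j B @ rps_insert (Suc j) (B!j # (drop (Suc j) B @ R))"
    apply (subst split) apply (rule ins_pass[OF hB]) done
  also have "\<dots> = take j B @ (Suc j # B!j) # drop (Suc j) B @ R"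
    using assms by simp
  also have "\<dots> = B[j := Suc j # B!j] @ R"
    using assms upd_conv_take_nth_drop[of j B] by simp
  finally show ?thesis .
qed

lemma bfold_low:
  "length B = t \<Longrightarrow> \<forall>i<t. B!i \<noteq> [] \<and> hd (B!i) = Suc i \<Longrightarrow> j \<le> t \<Longrightarrow>
   foldr rps_insert [1..<Suc j] (B @ R) = map (\<lambda>i. Suc i # B!i) [0..<j] @ drop j B @ R"
proof (induction j arbitrary: B)
  case 0
  then show ?case by simp
next
  case (Suc j)
  define B' where "B' = B[j := Suc j # B!j]"
  have "[1..<Suc (Suc j)] = [1..<Suc j] @ [Suc j]" by simp
  then have "foldr rps_insert [1..<Suc (Suc j)] (B @ R) = foldr rps_insert [1..<Suc j] (rps_insert (Suc j) (B @ R))"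
    by simp
  also have "rps_insert (Suc j) (B @ R) = B' @ R" unfolding B'_def
    using ins_mid Suc.prems by simp
  also have "foldr rps_insert [1..<Suc j] (B' @ R) = map (\<lambda>i. Suc i # B'!i) [0..<j] @ drop j B' @ R"
    apply (rule Suc.IH)
    using Suc.prems unfolding B'_def by (auto simp: nth_list_update)
  also have "\<dots> = map (\<lambda>i. Suc i # B!i) [0..<Suc j] @ drop (Suc j) B @ R"
  proof -
    have "map (\<lambda>i. Suc i # B'!i) [0..<j] = map (\<lambda>i. Suc i # B!i) [0..<j]"
      unfolding B'_def by simp
    moreover have "drop j B' = (Suc j # B!j) # drop (Suc j) B"
    proof -
      have "B' = take j B @ (Suc j # B!j) # drop (Suc j) B"
        unfolding B'_def using Suc.prems upd_conv_take_nth_drop[of j B] by simp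
      moreover have "length (take j B) = j" using Suc.prems by simp
      ultimately show ?thesis by simp
    qed
    ultimately show ?thesis by simp
  qed
  finally show ?case .
qed


lemma bfold:
  assumes "T = B @ E" "length B = t" "t < n"
    "\<forall>i<t. B!i \<noteq> [] \<and> hd (B!i) = Suc i"
    "E = [] \<or> (\<exists>e. E = [e] \<and> e \<noteq> [] \<and> set e \<subseteq> {Suc n})"
  shows "fold rps_insert (rev [1..<Suc n]) T
     = map (\<lambda>i. Suc i # B!i) [0..<t] @ [[Suc t..<Suc n] @ concat E]"
proof -
  have hB: "\<forall>c\<in>set B. hd c \<le> t"
  proof
    fix c assume "c \<in> set B"
    then obtain i where "i < length B" "c = B ! i" by (metis in_set_conv_nth)
    then show "hd c \<le> t" using assms by auto
  qed
  have "[1..<Suc n] = [1..<Suc t] @ [Suc t..<Suc n]"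
    using assms upt_add_eq_append[of 1 "Suc t" "n - t"] by simp
  then have "fold rps_insert (rev [1..<Suc n]) T
      = foldr rps_insert [1..<Suc t] (foldr rps_insert [Suc t..<Suc n] (B @ E))"
    using assms by (simp add: foldr_conv_fold)
  also have "foldr rps_insert [Suc t..<Suc n] (B @ E) = B @ [[Suc t..<Suc n] @ concat E]"
    using bfold_top[of "Suc t" n B t E] assms hB by simp
  also have "foldr rps_insert [1..<Suc t] (B @ [[Suc t..<Suc n] @ concat E])
      = map (\<lambda>i. Suc i # B!i) [0..<t] @ drop t B @ [[Suc t..<Suc n] @ concat E]"
    using bfold_low assms by simp
  finally show ?thesis using assms by simp
qed

definition Wd :: "nat \<Rightarrow> bool list \<Rightarrow> nat list" where
  "Wd n p = concat (map (\<lambda>b. if b then [Suc n] else rev [1..<Suc n]) p)"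

definition fcol :: "nat \<Rightarrow> nat list \<Rightarrow> bool list" where
  "fcol n c = replicate (count_list c (Suc n)) True @ (if set c \<subseteq> {Suc n} then [] else [False])"

definition Dec :: "nat \<Rightarrow> rps_tableau \<Rightarrow> bool list" where
  "Dec n T = concat (map (fcol n) T)"

definition good :: "nat \<Rightarrow> nat \<Rightarrow> rps_tableau \<Rightarrow> bool" where
  "good n t T = (\<exists>B E. T = B @ E \<and> length B = t \<and>
     (\<forall>i<t. B!i \<noteq> [] \<and> hd (B!i) = Suc i \<and> \<not> set (B!i) \<subseteq> {Suc n}) \<and>
     (E = [] \<or> (\<exists>e. E = [e] \<and> e \<noteq> [] \<and> set e \<subseteq> {Suc n})))"

lemma count_rep: "set e \<subseteq> {x} \<Longrightarrow> count_list e x = length e"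
  by (induction e) auto

lemma count_upt: "x \<ge> n \<Longrightarrow> count_list [k..<n] x = 0"
  by (induction n) auto

lemma main:
  "length p \<le> n \<Longrightarrow> good n (length (filter Not p)) (rps_tab (Wd n p)) \<and> Dec n (rps_tab (Wd n p)) = p"
proof (induction p rule: rev_induct)
  case Nil
  then show ?case by (auto simp: good_def Dec_def Wd_def rps_tab_def)
next
  case (snoc b p)
  let ?t = "length (filter Not p)"
  have tle: "?t \<le> length p" by (rule length_filter_le)
  from snoc have IH: "good n ?t (rps_tab (Wd n p))" "Dec n (rps_tab (Wd n p)) = p" by auto
  from IH(1) obtain B E where BE: "rps_tab (Wd n p) = B @ E" "length B = ?t"
     "\<forall>i<?t. B!i \<noteq> [] \<and> hd (B!i) = Suc i \<and> \<not> set (B!i) \<subseteq> {Suc n}"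
     "E = [] \<or> (\<exists>e. E = [e] \<and> e \<noteq> [] \<and> set e \<subseteq> {Suc n})"
    unfolding good_def by blast
  have tn: "?t < n" using snoc.prems tle by (simp del: length_filter_le)
  have hB: "\<forall>c\<in>set B. hd c < Suc n"
  proof
    fix c assume "c \<in> set B"
    then obtain i where "i < length B" "c = B ! i" by (metis in_set_conv_nth)
    then show "hd c < Suc n" using BE tn by auto
  qed
  have DB: "Dec n (B @ E) = Dec n B @ Dec n E" by (simp add: Dec_def)
  show ?case
  proof (cases b)
    case True
    have W: "rps_tab (Wd n (p @ [b])) = rps_insert (Suc n) (B @ E)"
      using True BE by (simp add: Wd_def rps_tab_append)
    also have "\<dots> = B @ rps_insert (Suc n) E" using ins_pass[OF hB] by simp
    finally have W2: "rps_tab (Wd n (p @ [b])) = B @ rps_insert (Suc n) E" .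
    show ?thesis
    proof (cases "E = []")
      case True
      have g: "good n ?t (B @ [[Suc n]])" unfolding good_def
        apply (rule exI[of _ B], rule exI[of _ "[[Suc n]]"]) using BE by auto
      have "rps_tab (Wd n (p @ [b])) = B @ [[Suc n]]" using W2 True by simp
      then show ?thesis using g BE IH(2) \<open>b\<close> DB True
        by (simp add: Dec_def fcol_def)
    next
      case False
      then obtain e where e: "E = [e]" "e \<noteq> []" "set e \<subseteq> {Suc n}" using BE by auto
      then have "hd e = Suc n" using hd_in_set by blast
      then have R: "rps_insert (Suc n) E = [Suc n # e]" using e by simp
      have g: "good n ?t (B @ [Suc n # e])" unfolding good_def
        apply (rule exI[of _ B], rule exI[of _ "[Suc n # e]"]) using BE e by auto
      have "Dec n [Suc n # e] = Dec n E @ [True]"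
        using e by (simp add: Dec_def fcol_def count_rep replicate_append_same)
      then show ?thesis using W2 R g IH(2) BE(1) DB \<open>b\<close>
        by (simp add: Dec_def)
    qed
  next
    case False
    define B' where "B' = map (\<lambda>i. Suc i # B!i) [0..<?t] @ [[Suc ?t..<Suc n] @ concat E]"
    have W: "rps_tab (Wd n (p @ [b])) = B'"
      using False BE bfold[of "B @ E" B E ?t n] tn unfolding B'_def
      by (simp add: Wd_def rps_tab_append)
    have lenB': "length B' = Suc ?t" unfolding B'_def by simp
    have g: "good n (Suc ?t) B'" unfolding good_def
    proof (rule exI[of _ B'], rule exI[of _ "[]"], intro conjI)
      show "\<forall>i<Suc ?t. B'!i \<noteq> [] \<and> hd (B'!i) = Suc i \<and> \<not> set (B'!i) \<subseteq> {Suc n}"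
      proof (intro allI impI)
        fix i assume i: "i < Suc ?t"
        show "B'!i \<noteq> [] \<and> hd (B'!i) = Suc i \<and> \<not> set (B'!i) \<subseteq> {Suc n}"
        proof (cases "i < ?t")
          case True
          then show ?thesis unfolding B'_def using BE tn by (simp add: nth_append)
        next
          case False
          then have "i = ?t" using i by simp
          then show ?thesis unfolding B'_def using tn
            by (simp add: nth_append upt_conv_Cons del: upt_Suc)
        qed
      qed
    qed (auto simp: lenB')
    have f1: "map (fcol n) (map (\<lambda>i. Suc i # B!i) [0..<?t]) = map (fcol n) B"
    proof (rule nth_equalityI)
      show "length (map (fcol n) (map (\<lambda>i. Suc i # B!i) [0..<?t])) = length (map (fcol n) B)"
        using BE by simp
    next
      fix i assume "i < length (map (fcol n) (map (\<lambda>i. Suc i # B!i) [0..<?t]))"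
      then have i: "i < ?t" by simp
      then show "map (fcol n) (map (\<lambda>i. Suc i # B!i) [0..<?t]) ! i = map (fcol n) B ! i"
        using BE tn by (auto simp: fcol_def)
    qed
    have f2: "fcol n ([Suc ?t..<Suc n] @ concat E) = Dec n E @ [False]"
    proof -
      have "Suc ?t \<in> set ([Suc ?t..<Suc n] @ concat E)" using tn by (simp, arith)
      then have ns: "\<not> set ([Suc ?t..<Suc n] @ concat E) \<subseteq> {Suc n}" using tn by auto
      have "count_list ([Suc ?t..<Suc n] @ concat E) (Suc n) = count_list (concat E) (Suc n)"
        by (simp add: count_upt)
      moreover have "Dec n E = replicate (count_list (concat E) (Suc n)) True"
        using BE(4) by (auto simp: Dec_def fcol_def)
      ultimately show ?thesis using ns by (simp add: fcol_def)
    qed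
    have "Dec n B' = Dec n B @ Dec n E @ [False]"
      unfolding B'_def Dec_def using f1 f2 by (simp add: Dec_def)
    then show ?thesis using W g IH(2) BE(1) DB False by simp
  qed
qed

lemma Wd_inj: "length p \<le> n \<Longrightarrow> length q \<le> n \<Longrightarrow> rps_tab (Wd n p) = rps_tab (Wd n q) \<Longrightarrow> p = q"
  using main[of p n] main[of q n] by metis

theorem theorem4p9:
  fixes u v :: "nat list"
  assumes "u \<noteq> v"
  shows "\<not> rps_satisfies u v"
proof
  assume sat: "rps_satisfies u v"
  obtain x where x: "map (\<lambda>y. y = x) u \<noteq> map (\<lambda>y. y = x) v"
  proof (cases "length u = length v")
    case True
    then obtain i where i: "i < length u" "u!i \<noteq> v!i"
      using assms nth_equalityI by blast
    then have "map (\<lambda>y. y = u!i) u \<noteq> map (\<lambda>y. y = u!i) v"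
      using True by (metis (mono_tags) nth_map)
    then show ?thesis using that by blast
  next
    case False
    then have "map (\<lambda>y. y = 0) u \<noteq> map (\<lambda>y. y = 0) v" by (metis length_map)
    then show ?thesis using that by blast
  qed
  define n where "n = length u + length v"
  define \<sigma> where "\<sigma> = (\<lambda>y. if y = x then [Suc n] else rev [1..<Suc n])"
  have pos: "\<forall>y. set (\<sigma> y) \<subseteq> {1..}" unfolding \<sigma>_def by auto
  have sw: "\<And>w. subst_word \<sigma> w = Wd n (map (\<lambda>y. y = x) w)"
    unfolding subst_word_def Wd_def \<sigma>_def by (simp add: comp_def)
  have "rps_tab (Wd n (map (\<lambda>y. y = x) u)) = rps_tab (Wd n (map (\<lambda>y. y = x) v))"
    using sat pos unfolding rps_satisfies_def rps_equiv_def sw[symmetric] by blast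
  then have "map (\<lambda>y. y = x) u = map (\<lambda>y. y = x) v"
    by (rule Wd_inj[rotated 2]) (auto simp: n_def)
  then show False using x by simp
qed

end
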